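(* Let $P$ be an integer and write $U_j=U_j(P,Q)$ for the Lucas sequence of the first kind. For integers $A,B$ consider the equation $\sigma_2(n)-n^2=An+B$ in positive integers $n$. Then every solution $n$ with $n>(|A|+|B|)^3$ has the following form (so all solutions not of this form are among the finitely many $n\le(|A|+|B|)^3$, which can be computed): (1) if $A=P^2+2$ and $B=-P^2+1$: $n=U_{2k-1}(P,-1)\,U_{2k+1}(P,-1)$ for some integer $k\ge 1$, with $U_{2k-1}(P,-1)$ and $U_{2k+1}(P,-1)$ both prime; (2) if $A=P^2+2$ and $B=P^2+1$: $n=U_{2k}(P,-1)\,U_{2k+2}(P,-1)$ for some integer $k\ge 0$, with $U_{2k}(P,-1)$ and $U_{2k+2}(P,-1)$ both prime; (3) if $A=P^2-2$ and $B=P^2+1$: $n=U_{k-1}(P,1)\,U_{k+1}(P,1)$ for some integer $k\ge 1$, with $U_{k-1}(P,1)$ and $U_{k+1}(P,1)$ both prime.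
   Context: For a positive integer $n$ and $k\ge 0$, $\sigma_k(n)=\sum_{d\mid n,\ d>0} d^k$. For integers $P,Q$, the Lucas sequences are defined for $j\ge 0$ by $U_0(P,Q)=0$, $U_1(P,Q)=1$, $U_j(P,Q)=P\,U_{j-1}(P,Q)-Q\,U_{j-2}(P,Q)$ for $j>1$, and $V_0(P,Q)=2$, $V_1(P,Q)=P$, $V_j(P,Q)=P\,V_{j-1}(P,Q)-Q\,V_{j-2}(P,Q)$ for $j>1$. *)

theory Defs
  imports "HOL-Computational_Algebra.Primes"
begin

definition sigma :: "nat \<Rightarrow> nat \<Rightarrow> nat" where
  "sigma k n = (\<Sum>d | d dvd n \<and> d > 0. d ^ k)"

fun lucasU :: "int \<Rightarrow> int \<Rightarrow> nat \<Rightarrow> int" where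
  "lucasU P Q 0 = 0"
| "lucasU P Q (Suc 0) = 1"
| "lucasU P Q (Suc (Suc j)) = P * lucasU P Q (Suc j) - Q * lucasU P Q j"

fun lucasV :: "int \<Rightarrow> int \<Rightarrow> nat \<Rightarrow> int" where
  "lucasV P Q 0 = 2"
| "lucasV P Q (Suc 0) = P"
| "lucasV P Q (Suc (Suc j)) = P * lucasV P Q (Suc j) - Q * lucasV P Q j"

end

theory Submission
  imports Defs
begin

lemma U_step2: "lucasU P Q (j+4) = (P ^ 2 - 2*Q) * lucasU P Q (j+2) - Q ^ 2 * lucasU P Q j"
proof -
  have a: "lucasU P Q (j+4) = P * lucasU P Q (j+3) - Q * lucasU P Q (j+2)"
    by (simp add: numeral_eq_Suc)
  have b: "lucasU P Q (j+3) = P * lucasU P Q (j+2) - Q * lucasU P Q (j+1)"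
    by (simp add: numeral_eq_Suc)
  have c: "lucasU P Q (j+2) = P * lucasU P Q (j+1) - Q * lucasU P Q j"
    by (simp add: numeral_eq_Suc)
  show ?thesis unfolding a b using c by (simp add: algebra_simps power2_eq_square)
qed

lemma vieta1:
  fixes P x y :: int
  assumes "0 < x" "x < y" "x ^ 2 + y ^ 2 - (P ^ 2+2)*x*y = -(P ^ 2)"
  shows "\<exists>i. x = lucasU P (-1) (2*i+1) \<and> y = lucasU P (-1) (2*Suc i+1)"
  using assms
proof (induction "nat x" arbitrary: x y rule: less_induct)
  case less
  show ?case
  proof (cases "x = 1")
    case True
    then have "(y-1)*(y-(P ^ 2+1)) = 0" using less.prems(3) by (simp add: algebra_simps power2_eq_square)
    hence "y = P ^ 2+1" using less.prems(2) True by auto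
    then show ?thesis using True by (intro exI[of _ 0]) (simp add: eval_nat_numeral power2_eq_square)
  next
    case False
    hence x2: "x \<ge> 2" using less.prems(1) by auto
    have P0: "P \<noteq> 0"
    proof
      assume "P=0"
      then have "(y-x) ^ 2 = 0" using less.prems(3) by (simp add: power2_eq_square algebra_simps)
      then show False using less.prems(2) by simp
    qed
    define y' where "y' = (P ^ 2+2)*x - y"
    have prod: "y*y' = x ^ 2 + P ^ 2" using less.prems(3) unfolding y'_def
      by (simp add: algebra_simps power2_eq_square)
    have "x ^ 2 + P ^ 2 > 0" using x2 by (simp add: add_pos_nonneg)
    hence "y*y' > 0" using prod by simp
    hence y'pos: "y' > 0" using less.prems by (simp add: zero_less_mult_iff)
    have "(x-y)*(x-y') = x ^ 2 - (P ^ 2+2)*x ^ 2 + y*y'" by (simp add: y'_def algebra_simps power2_eq_square)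
    also have "\<dots> = P ^ 2*(1 - x ^ 2)" using prod by (simp add: algebra_simps)
    finally have e: "(x-y)*(x-y') = P ^ 2*(1 - x ^ 2)" .
    have "x ^ 2 > 1" by (rule one_less_power) (use x2 in auto)
    moreover have "P ^ 2 > 0" using P0 by simp
    ultimately have "P ^ 2*(1 - x ^ 2) < 0" by (simp add: mult_pos_neg)
    hence "(x-y)*(x-y') < 0" using e by simp
    hence y'x: "y' < x" using less.prems(2) by (simp add: mult_less_0_iff)
    have eq': "y' ^ 2 + x ^ 2 - (P ^ 2+2)*y'*x = -(P ^ 2)" using less.prems(3) unfolding y'_def
      by (simp add: algebra_simps power2_eq_square)
    have "nat y' < nat x" using y'x y'pos by simp
    from less.hyps[OF this y'pos y'x eq'] obtain i where
      i: "y' = lucasU P (-1) (2*i+1)" "x = lucasU P (-1) (2*Suc i+1)" by blast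
    have "y = (P ^ 2+2)*x - y'" by (simp add: y'_def)
    also have "\<dots> = lucasU P (-1) ((2*i+1)+4)"
      using i U_step2[of P "-1" "2*i+1"] by (simp add: add.commute)
    finally have yy0: "y = lucasU P (-1) ((2*i+1)+4)" .
    have e: "2*Suc(Suc i)+1 = (2*i+1)+4" by simp
    have yy: "y = lucasU P (-1) (2*Suc(Suc i)+1)" unfolding e by (rule yy0)
    show ?thesis using i(2) yy by blast
  qed
qed

lemma sqr_lemma:
  fixes p q m :: nat
  assumes p: "prime p" and q: "prime q" and pq: "p < q" and m: "m ^ 2 = p*q + 1"
  shows "q = p + 2 \<and> m = p + 1"
proof -
  have p2: "p \<ge> 2" using p prime_ge_2_nat by blast
  have q2: "q \<ge> 3" using pq p2 by simp
  have "p*q \<ge> 2*3" using p2 q2 by (intro mult_mono) auto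
  hence m7: "m^2 \<ge> 7" using m by simp
  have m1: "m \<ge> 1" using m7 by (cases m) auto
  have fac: "p*q = (m-1)*(m+1)"
  proof -
    have "int (p*q) = int m ^ 2 - 1" using m by (metis add_diff_cancel_right' of_nat_1 of_nat_add of_nat_power)
    also have "\<dots> = (int m - 1)*(int m + 1)" by (simp add: algebra_simps power2_eq_square)
    also have "\<dots> = int ((m-1)*(m+1))" using m1 by (simp add: of_nat_diff algebra_simps)
    finally have "int (p*q) = int ((m-1)*(m+1))" .
    then show ?thesis by (simp only: of_nat_eq_iff)
  qed
  have "q dvd (m-1)*(m+1)" using fac by (metis dvd_triv_right)
  hence "q dvd (m-1) \<or> q dvd (m+1)" using q prime_dvd_mult_iff by blast
  thus ?thesis
  proof
    assume h: "q dvd m-1"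
    have "m - 1 \<noteq> 0" using m7 m1 by (cases "m = 1") auto
    hence "q \<le> m-1" using h by (simp add: dvd_imp_le)
    hence "q*q \<le> (m-1)*(m+1)" by (intro mult_mono) auto
    moreover have "p*q < q*q" using pq q2 by simp
    ultimately show ?thesis using fac by simp
  next
    assume "q dvd m+1"
    then obtain t where t: "m+1 = q*t" by blast
    hence "p*q = (m-1)*t*q" using fac by (simp add: algebra_simps)
    hence pt: "p = (m-1)*t" using q2 by simp
    hence "(m-1) dvd p" by simp
    hence "m - 1 = 1 \<or> m - 1 = p" using p prime_nat_iff by blast
    thus ?thesis
    proof
      assume "m - 1 = 1"
      hence "m = 2" using m1 by simp
      thus ?thesis using m7 by simp
    next
      assume h: "m - 1 = p"
      hence "p*1 = p*t" using pt by simp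
      hence "t = 1" using p2 by simp
      thus ?thesis using t h m1 by auto
    qed
  qed
qed

lemma extract_sq:
  fixes d P c :: int
  assumes "d ^ 2 = P ^ 2 * c" "P \<noteq> 0"
  shows "\<exists>t. d = P*t \<and> t ^ 2 = c"
proof -
  have "P ^ 2 dvd d ^ 2" using assms(1) by simp
  hence "P dvd d" by simp
  then obtain t where t: "d = P*t" by blast
  hence "P^2 * t^2 = P^2 * c" using assms(1) by (simp add: power_mult_distrib)
  hence "t^2 = c" using assms(2) by simp
  thus ?thesis using t by blast
qed

lemma lucas2: "lucasU 2 1 k = int k"
  by (induction "2::int" "1::int" k rule: lucasU.induct) (auto simp: algebra_simps)

lemma lucasm2: "lucasU (-2) 1 k = (-1)^(k+1) * int k"
  by (induction "-2::int" "1::int" k rule: lucasU.induct) (auto simp: algebra_simps)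

lemma divisors_prime_set: "prime (p::nat) \<Longrightarrow> {d. d dvd p \<and> d > 0} = {1, p}"
  using prime_nat_iff prime_gt_0_nat by auto

lemma divisors_pq_set:
  assumes "prime (p::nat)" "prime q"
  shows "{d. d dvd p*q \<and> d > 0} = {1, p, q, p*q}"
proof
  show "{d. d dvd p*q \<and> d > 0} \<subseteq> {1, p, q, p*q}"
  proof
    fix d assume "d \<in> {d. d dvd p*q \<and> d > 0}"
    hence "d dvd p*q" by simp
    then obtain a b where ab: "d = a*b" "a dvd p" "b dvd q" using division_decomp by blast
    have "a = 1 \<or> a = p" using ab(2) assms(1) prime_nat_iff by blast
    moreover have "b = 1 \<or> b = q" using ab(3) assms(2) prime_nat_iff by blast
    ultimately show "d \<in> {1, p, q, p*q}" using ab(1) by auto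
  qed
next
  show "{1, p, q, p*q} \<subseteq> {d. d dvd p*q \<and> d > 0}"
    using assms prime_gt_0_nat by auto
qed

lemma sigma_prime: "prime p \<Longrightarrow> sigma 2 p = 1 + p^2"
proof -
  assume p: "prime p"
  have "p > 1" using p prime_gt_1_nat by blast
  thus ?thesis unfolding sigma_def divisors_prime_set[OF p] by simp
qed

lemma sigma_pp: "prime p \<Longrightarrow> sigma 2 (p*p) = 1 + p^2 + (p*p)^2"
proof -
  assume p: "prime p"
  have "p > 1" using p prime_gt_1_nat by blast
  hence "p*p > p" by simp
  thus ?thesis unfolding sigma_def divisors_pq_set[OF p p] using \<open>p > 1\<close> by simp
qed

lemma sigma_pq: "prime p \<Longrightarrow> prime q \<Longrightarrow> p < q \<Longrightarrow> sigma 2 (p*q) = 1 + p^2 + q^2 + (p*q)^2"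
proof -
  assume p: "prime p" and q: "prime q" and pq: "p < q"
  have "p > 1" "q > 1" using p q prime_gt_1_nat by blast+
  hence "p*q > p" "p*q > q" by simp_all
  thus ?thesis unfolding sigma_def divisors_pq_set[OF p q] using \<open>p > 1\<close> \<open>q>1\<close> pq by simp
qed

lemma sigma_lower:
  assumes "n > 0" "m dvd n" "1 < m" "m < n"
  shows "1 + m^2 + n^2 \<le> sigma 2 n"
proof -
  let ?S = "{d. d dvd n \<and> d > 0}"
  have fin: "finite ?S" by (rule finite_subset[of _ "{..n}"]) (use assms(1) dvd_imp_le in auto)
  have sub: "{1, m, n} \<subseteq> ?S" using assms by auto
  have "sum (\<lambda>d. d^2) {1, m, n} \<le> sum (\<lambda>d. d^2) ?S"
    by (rule sum_mono2[OF fin sub]) auto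
  moreover have "sum (\<lambda>d. d^2) {1, m, n} = 1 + m^2 + n^2" using assms by simp
  ultimately show ?thesis unfolding sigma_def by simp
qed

lemma bound3:
  fixes A B :: int and n x u v :: nat
  assumes nd: "n = x*u*v" and x2: "2 \<le> x" and xu: "x \<le> u" and xv: "x \<le> v"
    and sol: "int (sigma 2 n) - int n ^ 2 = A * int n + B"
  shows "int n \<le> (\<bar>A\<bar> + \<bar>B\<bar>) ^ 3"
proof -
  define K where "K = \<bar>A\<bar> + \<bar>B\<bar>"
  define c where "c = u*v"
  have c4: "c \<ge> 2*2" unfolding c_def using x2 xu xv by (intro mult_mono) auto
  have nxc: "n = x*c" unfolding c_def nd by simp
  have cn: "c < n" unfolding nxc using x2 c4 by simp
  have npos: "n > 0" using cn by simp
  have "1 + c^2 + n^2 \<le> sigma 2 n" using sigma_lower[OF npos _ _ cn] nxc c4 by simp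
  hence "int (1 + c^2 + n^2) \<le> int (sigma 2 n)" by (simp only: of_nat_le_iff)
  hence "1 + int c ^ 2 \<le> A * int n + B" using sol by simp
  also have "A * int n + B \<le> K * int n"
  proof -
    have "A * int n \<le> \<bar>A\<bar> * int n" by (simp add: mult_right_mono)
    moreover have "B \<le> \<bar>B\<bar> * int n" using npos
      by (metis abs_ge_self abs_ge_zero dual_order.trans mult_le_cancel_left1 of_nat_0_less_iff of_nat_le_0_iff zero_less_iff_neq_zero linorder_not_le int_one_le_iff_zero_less)
    ultimately show ?thesis unfolding K_def by (simp add: algebra_simps)
  qed
  finally have "int c * int c < K * int x * int c" unfolding nxc by (simp add: power2_eq_square algebra_simps)
  hence cK: "int c < K * int x" using c4 by simp
  have "x*x \<le> c" unfolding c_def using xu xv by (intro mult_mono) auto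
  hence "int x * int x \<le> int c" by (metis of_nat_le_iff of_nat_mult)
  hence "int x * int x < K * int x" using cK by simp
  hence xK: "int x < K" using x2 by simp
  have Kpos: "K \<ge> 0" unfolding K_def by simp
  have "int n = int x * int c" unfolding nxc by simp
  also have "\<dots> \<le> int x * (K * int x)" using cK by (intro mult_left_mono) auto
  also have "\<dots> = K * (int x * int x)" by (simp add: algebra_simps)
  also have "\<dots> \<le> K * (K * K)" using xK Kpos by (intro mult_left_mono mult_mono) auto
  finally show ?thesis unfolding K_def by (simp add: power3_eq_cube)
qed

lemma three:
  fixes A B :: int and n x y z :: nat
  assumes nd: "n = x*y*z" and "2 \<le> x" "2 \<le> y" "2 \<le> z"
    and sol: "int (sigma 2 n) - int n ^ 2 = A * int n + B"
  shows "int n \<le> (\<bar>A\<bar> + \<bar>B\<bar>) ^ 3"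
proof -
  consider "x \<le> y \<and> x \<le> z" | "y \<le> x \<and> y \<le> z" | "z \<le> x \<and> z \<le> y" by linarith
  thus ?thesis
  proof cases
    case 1 thus ?thesis using bound3[OF nd] assms by auto
  next
    case 2
    have "n = y*x*z" using nd by simp
    thus ?thesis using bound3 2 assms by blast
  next
    case 3
    have "n = z*x*y" using nd by simp
    thus ?thesis using bound3 3 assms by blast
  qed
qed

lemma decomp: "(n::nat) \<ge> 2 \<Longrightarrow> \<not> prime n \<Longrightarrow> \<exists>a b. n = a*b \<and> a \<ge> 2 \<and> b \<ge> 2"
proof -
  assume n: "n \<ge> 2" "\<not> prime n"
  then obtain a where a: "a dvd n" "a \<noteq> 1" "a \<noteq> n" using prime_nat_iff by auto
  then obtain b where b: "n = a*b" by blast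
  have "a \<noteq> 0" using b n by auto
  moreover have "b \<noteq> 0" "b \<noteq> 1" using b n a by auto
  ultimately show ?thesis using a b by (intro exI[of _ a] exI[of _ b]) auto
qed

lemma struct_lemma:
  fixes A B :: int and n :: nat
  assumes n2: "n \<ge> 2" and sol: "int (sigma 2 n) - int n ^ 2 = A * int n + B"
    and big: "int n > (\<bar>A\<bar> + \<bar>B\<bar>) ^ 3"
  shows "prime n \<or> (\<exists>p. prime p \<and> n = p*p) \<or> (\<exists>p q. prime p \<and> prime q \<and> p < q \<and> n = p*q)"
proof (cases "prime n")
  case True thus ?thesis by simp
next
  case False
  then obtain a b where ab: "n = a*b" "a \<ge> 2" "b \<ge> 2" using decomp n2 by blast
  show ?thesis
  proof (cases "prime a \<and> prime b")
    case True
    consider "a = b" | "a < b" | "b < a" by linarith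
    thus ?thesis
    proof cases
      case 1 thus ?thesis using True ab by blast
    next
      case 2 thus ?thesis using True ab by blast
    next
      case 3
      have "n = b*a" using ab by simp
      thus ?thesis using True 3 by blast
    qed
  next
    case False
    hence "\<not> prime a \<or> \<not> prime b" by blast
    hence "\<exists>x y z. n = x*y*z \<and> x \<ge> 2 \<and> y \<ge> 2 \<and> z \<ge> 2"
    proof
      assume "\<not> prime a"
      then obtain c d where "a = c*d" "c \<ge> 2" "d \<ge> 2" using decomp ab by blast
      thus ?thesis using ab by (intro exI[of _ c] exI[of _ d] exI[of _ b]) auto
    next
      assume "\<not> prime b"
      then obtain c d where "b = c*d" "c \<ge> 2" "d \<ge> 2" using decomp ab by blast
      thus ?thesis using ab by (intro exI[of _ a] exI[of _ c] exI[of _ d]) (auto simp: mult.assoc)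
    qed
    then obtain x y z where "n = x*y*z" "x \<ge> 2" "y \<ge> 2" "z \<ge> 2" by blast
    from three[OF this sol] big show ?thesis by simp
  qed
qed

lemma case1_pq:
  fixes P :: int and p q :: nat
  assumes p: "prime p" and q: "prime q" and pq: "p < q"
    and e: "1 + int p ^ 2 + int q ^ 2 = (P^2 + 2) * (int p * int q) + (1 - P^2)"
  shows "\<exists>k::nat. k \<ge> 1 \<and> int (p*q) = lucasU P (-1) (2*k-1) * lucasU P (-1) (2*k+1)
               \<and> prime \<bar>lucasU P (-1) (2*k-1)\<bar> \<and> prime \<bar>lucasU P (-1) (2*k+1)\<bar>"
proof -
  have "0 < int p" using p prime_gt_0_nat by simp
  moreover have "int p < int q" using pq by simp
  moreover have "(int p) ^ 2 + (int q) ^ 2 - (P ^ 2+2)*(int p)*(int q) = -(P ^ 2)" using e by (simp add: algebra_simps)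
  ultimately obtain i where i: "int p = lucasU P (-1) (2*i+1)" "int q = lucasU P (-1) (2*Suc i+1)"
    using vieta1 by blast
  have k1: "2 * Suc i - 1 = 2*i+1" by simp
  show ?thesis
  proof (intro exI[of _ "Suc i"] conjI)
    show "int (p*q) = lucasU P (-1) (2*Suc i-1) * lucasU P (-1) (2*Suc i+1)"
      unfolding k1 using i by simp
    show "prime \<bar>lucasU P (-1) (2*Suc i-1)\<bar>" unfolding k1 using i(1)[symmetric] p by simp
    show "prime \<bar>lucasU P (-1) (2*Suc i+1)\<bar>" using i(2)[symmetric] q by simp
  qed simp
qed

lemma get_m:
  fixes P d :: int and p q :: nat
  assumes p: "prime p" and q: "prime q" and pq: "p < q"
    and e: "d ^ 2 = P ^ 2 * (int p * int q + 1)" and P0: "P \<noteq> 0"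
  shows "q = p + 2 \<and> d ^ 2 = P ^ 2 * (int p + 1) ^ 2"
proof -
  obtain t where t: "d = P*t" "t ^ 2 = int p * int q + 1" using extract_sq[OF e P0] by blast
  define m where "m = nat \<bar>t\<bar>"
  have "int (m ^ 2) = t ^ 2" unfolding m_def by simp
  hence "int (m ^ 2) = int (p*q + 1)" using t(2) by simp
  hence "m ^ 2 = p*q+1" by (simp only: of_nat_eq_iff)
  from sqr_lemma[OF p q pq this] have qm: "q = p + 2" "m = p + 1" by auto
  have "t ^ 2 = int (m ^ 2)" unfolding m_def by simp
  hence "t ^ 2 = (int p + 1) ^ 2" using qm by simp
  thus ?thesis using qm t(1) by (simp add: power_mult_distrib)
qed

lemma case2_pq:
  fixes P :: int and p q :: nat
  assumes p: "prime p" and q: "prime q" and pq: "p < q"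
    and e: "1 + int p ^ 2 + int q ^ 2 = (P^2 + 2) * (int p * int q) + (P^2 + 1)"
  shows False
proof -
  have e2: "(int q - int p) ^ 2 = P ^ 2 * (int p * int q + 1)" using e
    by (simp add: algebra_simps power2_eq_square)
  have P0: "P \<noteq> 0"
  proof
    assume "P = 0" thus False using e2 pq by simp
  qed
  from get_m[OF p q pq e2 P0] have h: "q = p + 2" "(int q - int p) ^ 2 = P ^ 2 * (int p + 1) ^ 2" by auto
  hence "4 = P ^ 2 * (int p + 1) ^ 2" by simp
  moreover have "P ^ 2 \<ge> 1" using P0 by (simp add: int_one_le_iff_zero_less)
  moreover have "(int p + 1) ^ 2 \<ge> 9"
  proof -
    have "int p + 1 \<ge> 3" using prime_ge_2_nat[OF p] by simp
    hence "(int p + 1) ^ 2 \<ge> 3 ^ 2" by (intro power_mono) auto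
    thus ?thesis by simp
  qed
  ultimately have "P ^ 2 * (int p + 1) ^ 2 \<ge> 1 * 9" by (intro mult_mono) auto
  thus False using \<open>4 = _\<close> by simp
qed

lemma case3_pq:
  fixes P :: int and p q :: nat
  assumes p: "prime p" and q: "prime q" and pq: "p < q"
    and e: "1 + int p ^ 2 + int q ^ 2 = (P^2 - 2) * (int p * int q) + (P^2 + 1)"
  shows "q = p + 2 \<and> P ^ 2 = 4"
proof -
  have e2: "(int p + int q) ^ 2 = P ^ 2 * (int p * int q + 1)" using e
    by (simp add: algebra_simps power2_eq_square)
  have P0: "P \<noteq> 0"
  proof
    assume "P = 0" thus False using e2 prime_gt_0_nat[OF p] by simp
  qed
  from get_m[OF p q pq e2 P0] have h: "q = p + 2" "(int p + int q) ^ 2 = P ^ 2 * (int p + 1) ^ 2" by auto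
  have "(int p + int q) ^ 2 = 4 * (int p + 1) ^ 2" unfolding h(1) by (simp add: power2_eq_square algebra_simps)
  hence "4 * (int p + 1) ^ 2 = P ^ 2 * (int p + 1) ^ 2" using h(2) by simp
  moreover have "(int p + 1) ^ 2 \<noteq> 0" by simp
  ultimately have "P ^ 2 = 4" by simp
  thus ?thesis using h by simp
qed

lemma eq_prime: "prime n \<Longrightarrow> int (sigma 2 n) - int n ^ 2 = A * int n + B \<Longrightarrow> 1 = A * int n + B"
  by (simp add: sigma_prime)

lemma eq_pp: "prime p \<Longrightarrow> n = p*p \<Longrightarrow> int (sigma 2 n) - int n ^ 2 = A * int n + B
   \<Longrightarrow> 1 + int p ^ 2 = A * (int p * int p) + B"
  by (simp add: sigma_pp)

lemma eq_pq: "prime p \<Longrightarrow> prime q \<Longrightarrow> p < q \<Longrightarrow> n = p*q \<Longrightarrow> int (sigma 2 n) - int n ^ 2 = A * int n + B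
   \<Longrightarrow> 1 + int p ^ 2 + int q ^ 2 = A * (int p * int q) + B"
  by (simp add: sigma_pq)

lemma sigma_one: "sigma 2 1 = 1"
proof -
  have "{d::nat. d dvd 1 \<and> d > 0} = {1}" by auto
  thus ?thesis unfolding sigma_def by simp
qed

lemma U_pm2:
  assumes "P ^ 2 = (4::int)"
  shows "lucasU P 1 p * lucasU P 1 (p+2) = int p * int (p+2)"
proof -
  have "P = 2 \<or> P = -2"
  proof -
    have "(P - 2) * (P + 2) = 0" using assms by (simp add: algebra_simps power2_eq_square)
    thus ?thesis by auto
  qed
  thus ?thesis
  proof
    assume "P = 2" thus ?thesis by (simp add: lucas2)
  next
    assume P: "P = -2"
    have "lucasU P 1 p * lucasU P 1 (p+2) = ((-1)^(p+1) * (-1)^(p+2+1)) * (int p * int (p+2))"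
      unfolding P lucasm2 by (simp only: ac_simps)
    also have "(-1::int)^(p+1) * (-1)^(p+2+1) = (-1)^(2*(p+2))"
    proof -
      have "(p+1) + (p+2+1) = 2*(p+2)" by simp
      thus ?thesis by (metis power_add)
    qed
    also have "(-1::int)^(2*(p+2)) = 1" by (simp add: power_mult)
    finally show ?thesis by simp
  qed
qed

lemma U_abs:
  assumes "P ^ 2 = (4::int)"
  shows "\<bar>lucasU P 1 k\<bar> = int k"
proof -
  have "(P - 2) * (P + 2) = 0" using assms by (simp add: algebra_simps power2_eq_square)
  hence "P = 2 \<or> P = -2" by auto
  thus ?thesis by (auto simp: lucas2 lucasm2 abs_mult)
qed

theorem theorem1p1:
  fixes P A B :: int and n :: nat
  assumes npos: "n > 0"
    and sol: "int (sigma 2 n) - int n ^ 2 = A * int n + B"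
    and big: "int n > (\<bar>A\<bar> + \<bar>B\<bar>) ^ 3"
  shows "(A = P^2 + 2 \<and> B = 1 - P^2 \<longrightarrow>
            (\<exists>k::nat. k \<ge> 1 \<and> int n = lucasU P (-1) (2*k-1) * lucasU P (-1) (2*k+1)
               \<and> prime \<bar>lucasU P (-1) (2*k-1)\<bar> \<and> prime \<bar>lucasU P (-1) (2*k+1)\<bar>))
       \<and> (A = P^2 + 2 \<and> B = P^2 + 1 \<longrightarrow>
            (\<exists>k::nat. int n = lucasU P (-1) (2*k) * lucasU P (-1) (2*k+2)
               \<and> prime \<bar>lucasU P (-1) (2*k)\<bar> \<and> prime \<bar>lucasU P (-1) (2*k+2)\<bar>))
       \<and> (A = P^2 - 2 \<and> B = P^2 + 1 \<longrightarrow>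
            (\<exists>k::nat. k \<ge> 1 \<and> int n = lucasU P 1 (k-1) * lucasU P 1 (k+1)
               \<and> prime \<bar>lucasU P 1 (k-1)\<bar> \<and> prime \<bar>lucasU P 1 (k+1)\<bar>))"
proof -
  have P2: "P ^ 2 \<ge> 0" by simp
  have n1: "n \<ge> 2 \<or> (A = 0 \<and> B = 0)"
  proof (cases "n = 1")
    case True
    define K where "K = \<bar>A\<bar> + \<bar>B\<bar>"
    have K0: "K \<ge> 0" unfolding K_def by simp
    have "K ^ 3 < 1" using big True unfolding K_def by simp
    hence "K < 1" using K0 by (metis one_le_power linorder_not_le)
    hence "K = 0" using K0 by simp
    thus ?thesis unfolding K_def by arith
  next
    case False thus ?thesis using npos by simp
  qed
  have S: "n \<ge> 2 \<Longrightarrow> prime n \<or> (\<exists>p. prime p \<and> n = p*p) \<or> (\<exists>p q. prime p \<and> prime q \<and> p < q \<and> n = p*q)"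
    using struct_lemma sol big by blast
  show ?thesis
  proof (intro conjI impI)
    assume h: "A = P^2 + 2 \<and> B = 1 - P^2"
    hence n2: "n \<ge> 2" using n1 P2 by auto
    from S[OF n2] consider (pr) "prime n" | (sq) p where "prime p" "n = p*p"
      | (pq) p q where "prime p" "prime q" "p < q" "n = p*q" by blast
    thus "\<exists>k::nat. k \<ge> 1 \<and> int n = lucasU P (-1) (2*k-1) * lucasU P (-1) (2*k+1)
               \<and> prime \<bar>lucasU P (-1) (2*k-1)\<bar> \<and> prime \<bar>lucasU P (-1) (2*k+1)\<bar>"
    proof cases
      case pr
      from eq_prime[OF pr sol] h have e: "(P^2+2) * int n = P^2" by simp
      have "(P^2+2) * int n \<ge> (P^2+2) * 2" using n2 P2 by (intro mult_left_mono) auto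
      hence False using e P2 by (simp add: algebra_simps)
      thus ?thesis by simp
    next
      case sq
      from eq_pp[OF sq sol] h have e0: "1 + int p ^ 2 = (P^2+2) * (int p * int p) + (1 - P^2)" by simp
      have e: "(P^2+1) * (int p * int p) = P^2" using e0 by algebra
      have "int p * int p \<ge> 2 * 2" using prime_ge_2_nat[OF sq(1)] by (intro mult_mono) auto
      hence "(P^2+1) * (int p * int p) \<ge> (P^2+1) * 4" using P2 by (intro mult_left_mono) auto
      hence False using e P2 by (simp add: algebra_simps)
      thus ?thesis by simp
    next
      case pq
      from eq_pq[OF pq sol] h have "1 + int p ^ 2 + int q ^ 2 = (P^2 + 2) * (int p * int q) + (1 - P^2)" by simp
      from case1_pq[OF pq(1-3) this] show ?thesis using pq(4) by simp
    qed
  next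
    assume h: "A = P^2 + 2 \<and> B = P^2 + 1"
    hence n2: "n \<ge> 2" using n1 P2 by auto
    from S[OF n2] consider (pr) "prime n" | (sq) p where "prime p" "n = p*p"
      | (pq) p q where "prime p" "prime q" "p < q" "n = p*q" by blast
    thus "\<exists>k::nat. int n = lucasU P (-1) (2*k) * lucasU P (-1) (2*k+2)
               \<and> prime \<bar>lucasU P (-1) (2*k)\<bar> \<and> prime \<bar>lucasU P (-1) (2*k+2)\<bar>"
    proof cases
      case pr
      from eq_prime[OF pr sol] h have e: "(P^2+2) * int n + P^2 = 0" by simp
      have "P^2 + 2 > 0" using P2 by linarith
      hence "(P^2+2) * int n > 0" using n2 by (intro mult_pos_pos) auto
      hence False using e P2 by (simp add: algebra_simps)
      thus ?thesis by simp
    next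
      case sq
      from eq_pp[OF sq sol] h have e0: "1 + int p ^ 2 = (P^2+2) * (int p * int p) + (P^2 + 1)" by simp
      have e: "(P^2+1) * (int p * int p) + P^2 = 0" using e0 by algebra
      have "(P^2+1) * (int p * int p) > 0" using P2 prime_gt_0_nat[OF sq(1)] by simp
      hence False using e P2 by (simp add: algebra_simps)
      thus ?thesis by simp
    next
      case pq
      from eq_pq[OF pq sol] h have "1 + int p ^ 2 + int q ^ 2 = (P^2 + 2) * (int p * int q) + (P^2 + 1)" by simp
      from case2_pq[OF pq(1-3) this] show ?thesis by simp
    qed
  next
    assume h: "A = P^2 - 2 \<and> B = P^2 + 1"
    hence n2: "n \<ge> 2" using n1 P2 by auto
    from S[OF n2] consider (pr) "prime n" | (sq) p where "prime p" "n = p*p"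
      | (pq) p q where "prime p" "prime q" "p < q" "n = p*q" by blast
    thus "\<exists>k::nat. k \<ge> 1 \<and> int n = lucasU P 1 (k-1) * lucasU P 1 (k+1)
               \<and> prime \<bar>lucasU P 1 (k-1)\<bar> \<and> prime \<bar>lucasU P 1 (k+1)\<bar>"
    proof cases
      case pr
      from eq_prime[OF pr sol] h have e: "P^2 * (int n + 1) = 2 * int n" by (simp add: algebra_simps)
      define Z where "Z = P^2"
      have Z0: "Z \<ge> 0" unfolding Z_def by simp
      have e': "Z * (int n + 1) = 2 * int n" using e unfolding Z_def .
      consider "Z = 0" | "Z = 1" | "Z \<ge> 2" using Z0 by linarith
      thus ?thesis
      proof cases
        case 3
        hence "Z * (int n + 1) \<ge> 2 * (int n + 1)" by (intro mult_right_mono) auto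
        hence False using e' by (simp add: algebra_simps)
        thus ?thesis by simp
      qed (use e' n2 in auto)
    next
      case sq
      from eq_pp[OF sq sol] h have e0: "1 + int p ^ 2 = (P^2 - 2) * (int p * int p) + (P^2 + 1)" by simp
      have e: "3 * (int p * int p) = P^2 * (int p * int p + 1)" using e0 by algebra
      define Z where "Z = P^2"
      define W where "W = int p * int p"
      have Z0: "Z \<ge> 0" unfolding Z_def by simp
      have W4: "W \<ge> 2 * 2" unfolding W_def using prime_ge_2_nat[OF sq(1)] by (intro mult_mono) auto
      have e': "3 * W = Z * (W + 1)" using e unfolding Z_def W_def .
      consider "Z = 0" | "Z = 1" | "Z = 2" | "Z \<ge> 3" using Z0 by linarith
      thus ?thesis
      proof cases
        case 4
        hence "Z * (W + 1) \<ge> 3 * (W + 1)" using W4 by (intro mult_right_mono) auto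
        hence False using e' by (simp add: algebra_simps)
        thus ?thesis by simp
      qed (use e' W4 in auto)
    next
      case pq
      from eq_pq[OF pq sol] h have "1 + int p ^ 2 + int q ^ 2 = (P^2 - 2) * (int p * int q) + (P^2 + 1)" by simp
      from case3_pq[OF pq(1-3) this] have c: "q = p + 2" "P^2 = 4" by auto
      show ?thesis
      proof (intro exI[of _ "p+1"] conjI)
        have i1: "p+1-1 = p" by simp
        have i2: "p+1+1 = p+2" by simp
        have nn: "int n = int p * int (p+2)" using pq(4) c(1) by (simp add: algebra_simps)
        show "int n = lucasU P 1 (p+1-1) * lucasU P 1 (p+1+1)"
          unfolding i1 i2 nn using U_pm2[OF c(2), of p] by simp
        show "prime \<bar>lucasU P 1 (p+1-1)\<bar>" unfolding i1 U_abs[OF c(2)] using pq(1) by simp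
        have "prime (p+2)" using pq(2) c(1) by simp
        hence "prime (int (p+2))" by (simp only: prime_nat_int_transfer)
        thus "prime \<bar>lucasU P 1 (p+1+1)\<bar>" unfolding i2 U_abs[OF c(2)] .
      qed simp
    qed
  qed
qed

end
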